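(* Let $L$ be an infinite set and let $Q$ be either the edgeless cube $Q_L$ or the edged cube $\bar Q_L$. The universally convergent basic sequences on $Q$ form a submonoid $\mathrm{uc}_L$ of the monoid $\mathrm{m}_L$ of all basic sequences under concatenation.
   Context: Let $L$ be an infinite set, $-L=\{-r:r\in L\}$ a disjoint copy of $L$, and $0$ a new element; $L^\dagger=-L\cup\{0\}\cup L$ with $-(-r)=r$, $-0=0$. Adjoin $\pm\infty$ with $-(+\infty)=-\infty$ and set $\bar L^\dagger=L^\dagger\cup\{\pm\infty\}$. Points of $U=(\bar L^\dagger)^3$ have coordinates $x,y,z$. The edgeless cube $Q_L$ is the set of points of $U$ with exactly one coordinate in $\{\pm\infty\}$ (cells). The edged cube $\bar Q_L$ is the set of cells $(p,i)$ with $p\in U$, $i\in\{x,y,z\}$, $p_i\in\{\pm\infty\}$ ($i$ marks the face). For $i\in\{x,y,z\}$, $\alpha\in\bar L^\dagger$, the quarter-turn twist $T_{i,\alpha}$ is the permutation of cells fixing every cell whose point $p$ has $p_i\ne\alpha$ and acting on the others by $T_{x,\alpha}(\alpha,y,z)=(\alpha,-z,y)$, $T_{y,\alpha}(x,\alpha,z)=(z,\alpha,-x)$, $T_{z,\alpha}(x,y,\alpha)=(-y,x,\alpha)$ (in $\bar Q_L$ the marked coordinate is carried along by the rotation). Basic twists are $T,T^2,T^3$ for quarter-turn twists $T$. A basic sequence is a sequence $\langle\sigma_\eta:\eta<\theta\rangle$ of basic twists of ordinal length $\theta$; $\mathrm{m}_L$ is the monoid of all basic sequences under concatenation, with identity the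 empty sequence. A labelling is a map $f$ from cells to $X\cup\{\mathrm{NaC}\}$ for a set $X\not\ni\mathrm{NaC}$; it is legal if it never takes value NaC. A twist $\sigma$ acts by $(\sigma f)(c)=f(\sigma^{-1}c)$. Applying $\langle\sigma_\eta:\eta<\theta\rangle$ to $f_0$ produces $f_{\eta+1}=\sigma_\eta f_\eta$, and for limit $\lambda\le\theta$, $f_\lambda(c)$ is the eventually constant value of $f_\eta(c)$ ($\eta<\lambda$) if it exists and NaC otherwise; $f_\theta$ is the terminal labelling. The sequence is universally convergent if, applied to the identity labelling (each cell labelled by itself), its terminal labelling is legal. *)

theory Defs
  imports Main
begin

text \<open>Elements of bar L-dagger over a set L of type 'a: Pos a stands for a (a in L),
  Neg a for -a, Zero for 0, PInf/MInf for +infinity/-infinity.\<close>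
datatype 'a ext = Neg 'a | Zero | Pos 'a | PInf | MInf

fun eneg :: "'a ext \<Rightarrow> 'a ext" where
  "eneg (Neg a) = Pos a"
| "eneg (Pos a) = Neg a"
| "eneg Zero = Zero"
| "eneg PInf = MInf"
| "eneg MInf = PInf"

definition barL :: "'a set \<Rightarrow> 'a ext set" where
  "barL L = Neg ` L \<union> Pos ` L \<union> {Zero, PInf, MInf}"

definition is_inf :: "'a ext \<Rightarrow> bool" where
  "is_inf e \<longleftrightarrow> e = PInf \<or> e = MInf"

type_synonym 'a pt = "'a ext \<times> 'a ext \<times> 'a ext"

datatype axis = AX | AY | AZ

fun coord :: "'a pt \<Rightarrow> axis \<Rightarrow> 'a ext" where
  "coord (x, y, z) AX = x"
| "coord (x, y, z) AY = y"
| "coord (x, y, z) AZ = z"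

definition in_U :: "'a set \<Rightarrow> 'a pt \<Rightarrow> bool" where
  "in_U L p \<longleftrightarrow> coord p AX \<in> barL L \<and> coord p AY \<in> barL L \<and> coord p AZ \<in> barL L"

definition edgeless_cube :: "'a set \<Rightarrow> 'a pt set" where
  "edgeless_cube L = {(x, y, z). in_U L (x, y, z) \<and>
     ((is_inf x \<and> \<not> is_inf y \<and> \<not> is_inf z) \<or>
      (\<not> is_inf x \<and> is_inf y \<and> \<not> is_inf z) \<or>
      (\<not> is_inf x \<and> \<not> is_inf y \<and> is_inf z))}"

definition edged_cube :: "'a set \<Rightarrow> ('a pt \<times> axis) set" where
  "edged_cube L = {(p, i). in_U L p \<and> is_inf (coord p i)}"

fun qturn :: "axis \<Rightarrow> 'a ext \<Rightarrow> 'a pt \<Rightarrow> 'a pt" where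
  "qturn AX \<alpha> (x, y, z) = (if x = \<alpha> then (x, eneg z, y) else (x, y, z))"
| "qturn AY \<alpha> (x, y, z) = (if y = \<alpha> then (z, y, eneg x) else (x, y, z))"
| "qturn AZ \<alpha> (x, y, z) = (if z = \<alpha> then (eneg y, x, z) else (x, y, z))"

text \<open>How the marked coordinate is carried along by the rotation about axis i.\<close>
fun mark_turn :: "axis \<Rightarrow> axis \<Rightarrow> axis" where
  "mark_turn AX AX = AX" | "mark_turn AX AY = AZ" | "mark_turn AX AZ = AY"
| "mark_turn AY AX = AZ" | "mark_turn AY AY = AY" | "mark_turn AY AZ = AX"
| "mark_turn AZ AX = AY" | "mark_turn AZ AY = AX" | "mark_turn AZ AZ = AZ"

definition qturn_edged :: "axis \<Rightarrow> 'a ext \<Rightarrow> 'a pt \<times> axis \<Rightarrow> 'a pt \<times> axis" where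
  "qturn_edged i \<alpha> c = (case c of (p, j) \<Rightarrow>
     (if coord p i = \<alpha> then (qturn i \<alpha> p, mark_turn i j) else (p, j)))"

text \<open>A basic twist: Tw i alpha k stands for (T_{i,alpha})^k, k in {1,2,3}.\<close>
datatype 'a twist = Tw axis "'a ext" nat

definition valid_twist :: "'a set \<Rightarrow> 'a twist \<Rightarrow> bool" where
  "valid_twist L t = (case t of Tw i \<alpha> k \<Rightarrow> \<alpha> \<in> barL L \<and> k \<in> {1, 2, 3})"

definition perm_edgeless :: "'a twist \<Rightarrow> 'a pt \<Rightarrow> 'a pt" where
  "perm_edgeless t = (case t of Tw i \<alpha> k \<Rightarrow> qturn i \<alpha> ^^ k)"

definition perm_edged :: "'a twist \<Rightarrow> 'a pt \<times> axis \<Rightarrow> 'a pt \<times> axis" where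
  "perm_edged t = (case t of Tw i \<alpha> k \<Rightarrow> qturn_edged i \<alpha> ^^ k)"

text \<open>A labelling of cells of type 'c with values in 'x; None plays the role of NaC.
  The twist sigma acts by (sigma f)(c) = f(sigma^{-1} c).\<close>
definition act :: "('t \<Rightarrow> 'c \<Rightarrow> 'c) \<Rightarrow> 't \<Rightarrow> ('c \<Rightarrow> 'x option) \<Rightarrow> ('c \<Rightarrow> 'x option)" where
  "act P \<sigma> f = (\<lambda>c. f (inv (P \<sigma>) c))"

text \<open>Basic sequences of ordinal length: indexed by the field of a well-order r.
  Stages are Some eta (eta in Field r) and None (the terminal stage theta).\<close>
definition basic_seq :: "'a set \<Rightarrow> 'i rel \<Rightarrow> ('i \<Rightarrow> 'a twist) \<Rightarrow> bool" where
  "basic_seq L r s \<longleftrightarrow> Well_order r \<and> (\<forall>i\<in>Field r. valid_twist L (s i))"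

definition stages :: "'i rel \<Rightarrow> 'i option set" where
  "stages r = Some ` Field r \<union> {None}"

definition sless :: "'i rel \<Rightarrow> 'i option \<Rightarrow> 'i option \<Rightarrow> bool" where
  "sless r a b = (case (a, b) of
      (Some i, Some j) \<Rightarrow> (i, j) \<in> r \<and> i \<noteq> j
    | (Some i, None) \<Rightarrow> i \<in> Field r
    | (None, _) \<Rightarrow> False)"

definition ev_const :: "'i rel \<Rightarrow> ('i option \<Rightarrow> 'c \<Rightarrow> 'x option) \<Rightarrow> 'i option \<Rightarrow> 'c \<Rightarrow> 'x option \<Rightarrow> bool" where
  "ev_const r F b c v \<longleftrightarrow> (\<exists>\<eta>\<in>Field r. sless r (Some \<eta>) b \<and>
      (\<forall>\<xi>\<in>Field r. (\<xi> = \<eta> \<or> sless r (Some \<eta>) (Some \<xi>)) \<and> sless r (Some \<xi>) b \<longrightarrow> F (Some \<xi>) c = v))"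

definition is_run :: "('t \<Rightarrow> 'c \<Rightarrow> 'c) \<Rightarrow> 'i rel \<Rightarrow> ('i \<Rightarrow> 't) \<Rightarrow> ('c \<Rightarrow> 'x option)
    \<Rightarrow> ('i option \<Rightarrow> 'c \<Rightarrow> 'x option) \<Rightarrow> bool" where
  "is_run P r s f0 F \<longleftrightarrow> (\<forall>b\<in>stages r.
     \<comment> \<open>stage 0\<close>
     ((\<not> (\<exists>\<eta>\<in>Field r. sless r (Some \<eta>) b)) \<longrightarrow> F b = f0) \<and>
     \<comment> \<open>successor stage eta+1\<close>
     (\<forall>\<eta>\<in>Field r. sless r (Some \<eta>) b \<and> \<not> (\<exists>\<xi>\<in>Field r. sless r (Some \<eta>) (Some \<xi>) \<and> sless r (Some \<xi>) b)
         \<longrightarrow> F b = act P (s \<eta>) (F (Some \<eta>))) \<and>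
     \<comment> \<open>limit stage\<close>
     (((\<exists>\<eta>\<in>Field r. sless r (Some \<eta>) b) \<and>
       (\<forall>\<eta>\<in>Field r. sless r (Some \<eta>) b \<longrightarrow> (\<exists>\<xi>\<in>Field r. sless r (Some \<eta>) (Some \<xi>) \<and> sless r (Some \<xi>) b)))
       \<longrightarrow> (\<forall>c. (if \<exists>v. ev_const r F b c v then ev_const r F b c (F b c) else F b c = None))))"

definition univ_conv :: "'c set \<Rightarrow> ('t \<Rightarrow> 'c \<Rightarrow> 'c) \<Rightarrow> 'i rel \<Rightarrow> ('i \<Rightarrow> 't) \<Rightarrow> bool" where
  "univ_conv C P r s \<longleftrightarrow> (\<exists>F. is_run P r s (\<lambda>c. Some c) F \<and> (\<forall>c\<in>C. F None c \<noteq> None))"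

definition concat_rel :: "'i rel \<Rightarrow> 'j rel \<Rightarrow> ('i + 'j) rel" where
  "concat_rel r1 r2 = map_prod Inl Inl ` r1 \<union> map_prod Inr Inr ` r2
     \<union> (Inl ` Field r1) \<times> (Inr ` Field r2)"

definition concat_seq :: "('i \<Rightarrow> 't) \<Rightarrow> ('j \<Rightarrow> 't) \<Rightarrow> ('i + 'j \<Rightarrow> 't)" where
  "concat_seq s1 s2 = case_sum s1 s2"

end

theory Submission
  imports Defs
begin



lemma eneg_eneg[simp]: "eneg (eneg e) = e" by (cases e) auto
lemma eneg_barL[simp]: "eneg e \<in> barL L \<longleftrightarrow> e \<in> barL L" by (cases e) (auto simp: barL_def)
lemma eneg_inf[simp]: "is_inf (eneg e) \<longleftrightarrow> is_inf e" by (cases e) (auto simp: is_inf_def)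

lemma qturn4: "(qturn i \<alpha> ^^ 4) p = p"
  by (cases i; cases p) (auto simp: numeral_eq_Suc)

lemma qturn_coord: "coord (qturn i \<alpha> p) i = coord p i"
  by (cases i; cases p) auto

lemma mark4: "(mark_turn i ^^ 4) j = j"
  by (cases i; cases j) (auto simp: numeral_eq_Suc)

lemma qturn_edged4: "(qturn_edged i \<alpha> ^^ 4) c = c"
proof -
  obtain p j where c: "c = (p, j)" by (cases c)
  show ?thesis
  proof (cases "coord p i = \<alpha>")
    case True
    have "\<And>n. (qturn_edged i \<alpha> ^^ n) (p, j) = ((qturn i \<alpha> ^^ n) p, (mark_turn i ^^ n) j)"
    proof -
      fix n show "(qturn_edged i \<alpha> ^^ n) (p, j) = ((qturn i \<alpha> ^^ n) p, (mark_turn i ^^ n) j)"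
      proof (induction n)
        case (Suc n)
        have "coord ((qturn i \<alpha> ^^ n) p) i = \<alpha>"
          using True by (induction n) (auto simp: qturn_coord)
        then show ?case using Suc by (simp add: qturn_edged_def)
      qed simp
    qed
    then show ?thesis using c qturn4 mark4 by simp
  next
    case False
    then have "\<And>n. (qturn_edged i \<alpha> ^^ n) (p, j) = (p, j)"
      by (induct_tac n) (auto simp: qturn_edged_def)
    then show ?thesis using c by simp
  qed
qed

lemma bij4: assumes "\<And>x. (f ^^ 4) x = x" shows "bij f"
proof (rule o_bij[of "f ^^ 3"])
  have e: "f ^^ 4 = f ^^ 3 \<circ> f" "f ^^ 4 = f \<circ> f ^^ 3"
    using funpow_add[of 3 1 f] funpow_add[of 1 3 f] by simp_all
  show "(f ^^ 3) \<circ> f = id" using assms e(1) by (metis eq_id_iff)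
  show "f \<circ> (f ^^ 3) = id" using assms e(2) by (metis eq_id_iff)
qed

lemma bij_pow: "bij (f::'z \<Rightarrow> 'z) \<Longrightarrow> bij (f ^^ n)"
  by (induction n) (simp_all add: bij_comp funpow.simps)

lemma pres_pow: "(\<And>x. f x \<in> C \<longleftrightarrow> x \<in> C) \<Longrightarrow> (f ^^ n) x \<in> C \<longleftrightarrow> x \<in> C"
  by (induction n) auto

lemma qturn_edgeless: "qturn i \<alpha> p \<in> edgeless_cube L \<longleftrightarrow> p \<in> edgeless_cube L"
  by (cases i; cases p) (auto simp: edgeless_cube_def in_U_def)

lemma qturn_edged_pres: "qturn_edged i \<alpha> c \<in> edged_cube L \<longleftrightarrow> c \<in> edged_cube L"
  by (cases i; cases c; auto simp: edged_cube_def in_U_def qturn_edged_def; rename_tac j; case_tac j; auto)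

lemma perm_edgeless_ok: "bij (perm_edgeless t) \<and> (\<forall>c. perm_edgeless t c \<in> edgeless_cube L \<longleftrightarrow> c \<in> edgeless_cube L)"
  by (cases t) (simp add: perm_edgeless_def bij_pow bij4 qturn4 pres_pow qturn_edgeless)

lemma perm_edged_ok: "bij (perm_edged t) \<and> (\<forall>c. perm_edged t c \<in> edged_cube L \<longleftrightarrow> c \<in> edged_cube L)"
  by (cases t) (simp add: perm_edged_def bij_pow bij4 qturn_edged4 pres_pow qturn_edged_pres)




lemma sless_field: "sless r (Some \<eta>) b \<Longrightarrow> \<eta> \<in> Field r"
  by (cases b) (auto simp: sless_def intro: FieldI1)

lemma sless_None[simp]: "sless r (Some \<eta>) None \<longleftrightarrow> \<eta> \<in> Field r"
  by (simp add: sless_def)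
lemma sless_Some[simp]: "sless r (Some \<eta>) (Some \<xi>) \<longleftrightarrow> (\<eta>, \<xi>) \<in> r \<and> \<eta> \<noteq> \<xi>"
  by (simp add: sless_def)
lemma sless_None_left[simp]: "\<not> sless r None b"
  by (simp add: sless_def)

lemma stage_induct:
  assumes wo: "Well_order r" and b: "b \<in> stages r"
    and step: "\<And>b. b \<in> stages r \<Longrightarrow> (\<And>\<eta>. sless r (Some \<eta>) b \<Longrightarrow> P (Some \<eta>)) \<Longrightarrow> P b"
  shows "P b"
proof -
  have wf: "wf (r - Id)" using wo by (simp add: well_order_on_def)
  have all: "\<forall>\<eta>. \<eta> \<in> Field r \<longrightarrow> P (Some \<eta>)"
  proof (rule allI)
    fix \<eta> show "\<eta> \<in> Field r \<longrightarrow> P (Some \<eta>)"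
    proof (induction \<eta> rule: wf_induct[OF wf])
      case (1 x)
      show ?case
      proof
        assume "x \<in> Field r"
        then have st: "Some x \<in> stages r" by (simp add: stages_def)
        have ih: "P (Some y)" if "sless r (Some y) (Some x)" for y
        proof -
          have "(y, x) \<in> r - Id" using that by simp
          then show ?thesis using 1 sless_field[OF that] by blast
        qed
        show "P (Some x)" by (rule step[OF st ih])
      qed
    qed
  qed
  show ?thesis
  proof (cases b)
    case None
    show ?thesis
    proof (rule step[OF b])
      fix \<eta> assume "sless r (Some \<eta>) b" then show "P (Some \<eta>)" using all sless_field[of r \<eta> b] by blast
    qed
  next
    case (Some a)
    then have "a \<in> Field r" using b by (simp add: stages_def image_iff)
    then show ?thesis using all Some by blast
  qed
qed

lemma tails_meet:
  assumes wo: "Well_order r" and e1: "ev_const r F b c v" and e2: "ev_const r F b d w"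
  shows "\<exists>\<xi>\<in>Field r. sless r (Some \<xi>) b \<and> F (Some \<xi>) c = v \<and> F (Some \<xi>) d = w"
proof -
  obtain \<eta>1 where h1: "\<eta>1 \<in> Field r" "sless r (Some \<eta>1) b"
    "\<forall>\<xi>\<in>Field r. (\<xi> = \<eta>1 \<or> sless r (Some \<eta>1) (Some \<xi>)) \<and> sless r (Some \<xi>) b \<longrightarrow> F (Some \<xi>) c = v"
    using e1 unfolding ev_const_def by blast
  obtain \<eta>2 where h2: "\<eta>2 \<in> Field r" "sless r (Some \<eta>2) b"
    "\<forall>\<xi>\<in>Field r. (\<xi> = \<eta>2 \<or> sless r (Some \<eta>2) (Some \<xi>)) \<and> sless r (Some \<xi>) b \<longrightarrow> F (Some \<xi>) d = w"
    using e2 unfolding ev_const_def by blast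
  have tot: "\<eta>1 = \<eta>2 \<or> (\<eta>1, \<eta>2) \<in> r \<or> (\<eta>2, \<eta>1) \<in> r"
    using wo h1(1) h2(1) unfolding well_order_on_def linear_order_on_def total_on_def by blast
  then show ?thesis
  proof (elim disjE)
    assume "\<eta>1 = \<eta>2" then show ?thesis using h1 h2 by blast
  next
    assume "(\<eta>1, \<eta>2) \<in> r"
    then show ?thesis using h1 h2 by (cases "\<eta>1 = \<eta>2") auto
  next
    assume "(\<eta>2, \<eta>1) \<in> r"
    then show ?thesis using h1 h2 by (cases "\<eta>1 = \<eta>2") auto
  qed
qed

lemma ev_const_unique:
  "Well_order r \<Longrightarrow> ev_const r F b c v \<Longrightarrow> ev_const r F b c w \<Longrightarrow> v = w"
  using tails_meet[of r F b c v c w] by auto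

definition clause :: "('t \<Rightarrow> 'c \<Rightarrow> 'c) \<Rightarrow> 'i rel \<Rightarrow> ('i \<Rightarrow> 't) \<Rightarrow> ('c \<Rightarrow> 'x option)
    \<Rightarrow> ('i option \<Rightarrow> 'c \<Rightarrow> 'x option) \<Rightarrow> 'i option \<Rightarrow> bool" where
  "clause P r s f0 F b \<longleftrightarrow>
     ((\<not> (\<exists>\<eta>\<in>Field r. sless r (Some \<eta>) b)) \<longrightarrow> F b = f0) \<and>
     (\<forall>\<eta>\<in>Field r. sless r (Some \<eta>) b \<and> \<not> (\<exists>\<xi>\<in>Field r. sless r (Some \<eta>) (Some \<xi>) \<and> sless r (Some \<xi>) b)
         \<longrightarrow> F b = act P (s \<eta>) (F (Some \<eta>))) \<and>
     (((\<exists>\<eta>\<in>Field r. sless r (Some \<eta>) b) \<and>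
       (\<forall>\<eta>\<in>Field r. sless r (Some \<eta>) b \<longrightarrow> (\<exists>\<xi>\<in>Field r. sless r (Some \<eta>) (Some \<xi>) \<and> sless r (Some \<xi>) b)))
       \<longrightarrow> (\<forall>c. (if \<exists>v. ev_const r F b c v then ev_const r F b c (F b c) else F b c = None)))"

lemma bex_sless: "(\<exists>\<eta>\<in>Field r. sless r (Some \<eta>) b \<and> Q \<eta>) \<longleftrightarrow> (\<exists>\<eta>. sless r (Some \<eta>) b \<and> Q \<eta>)"
  by (blast dest: sless_field)
lemma bex_sless2: "(\<exists>\<eta>\<in>Field r. sless r (Some \<eta>) b) \<longleftrightarrow> (\<exists>\<eta>. sless r (Some \<eta>) b)"
  by (blast dest: sless_field)
lemma bex_sless3: "(\<exists>\<eta>\<in>Field r. sless r (Some x) (Some \<eta>) \<and> sless r (Some \<eta>) b) \<longleftrightarrow> (\<exists>\<eta>. sless r (Some x) (Some \<eta>) \<and> sless r (Some \<eta>) b)"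
  by (blast dest: sless_field)
lemma ball_sless: "(\<forall>\<eta>\<in>Field r. sless r (Some \<eta>) b \<longrightarrow> Q \<eta>) \<longleftrightarrow> (\<forall>\<eta>. sless r (Some \<eta>) b \<longrightarrow> Q \<eta>)"
  by (blast dest: sless_field)
lemma ball_sless2: "(\<forall>\<eta>\<in>Field r. sless r (Some \<eta>) b \<and> R \<eta> \<longrightarrow> Q \<eta>) \<longleftrightarrow> (\<forall>\<eta>. sless r (Some \<eta>) b \<and> R \<eta> \<longrightarrow> Q \<eta>)"
  by (blast dest: sless_field)

lemma clause_alt: "clause P r s f0 F b \<longleftrightarrow>
     ((\<not> (\<exists>\<eta>. sless r (Some \<eta>) b)) \<longrightarrow> F b = f0) \<and>
     (\<forall>\<eta>. sless r (Some \<eta>) b \<and> \<not> (\<exists>\<xi>. sless r (Some \<eta>) (Some \<xi>) \<and> sless r (Some \<xi>) b)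
         \<longrightarrow> F b = act P (s \<eta>) (F (Some \<eta>))) \<and>
     (((\<exists>\<eta>. sless r (Some \<eta>) b) \<and>
       (\<forall>\<eta>. sless r (Some \<eta>) b \<longrightarrow> (\<exists>\<xi>. sless r (Some \<eta>) (Some \<xi>) \<and> sless r (Some \<xi>) b)))
       \<longrightarrow> (\<forall>c. (if \<exists>v. ev_const r F b c v then ev_const r F b c (F b c) else F b c = None)))"
  unfolding clause_def bex_sless2 bex_sless3 ball_sless ball_sless2 by (rule refl)

lemma is_run_clause: "is_run P r s f0 F \<longleftrightarrow> (\<forall>b\<in>stages r. clause P r s f0 F b)"
  unfolding is_run_def clause_def by (rule refl)

lemma clause_zero: "clause P r s f0 F b \<Longrightarrow> \<not> (\<exists>\<eta>. sless r (Some \<eta>) b) \<Longrightarrow> F b = f0"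
  unfolding clause_alt by (drule conjunct1) (erule mp)

lemma clause_succ: "clause P r s f0 F b \<Longrightarrow> sless r (Some \<eta>) b \<Longrightarrow>
   \<not> (\<exists>\<xi>. sless r (Some \<eta>) (Some \<xi>) \<and> sless r (Some \<xi>) b) \<Longrightarrow> F b = act P (s \<eta>) (F (Some \<eta>))"
  unfolding clause_alt by (drule conjunct2, drule conjunct1, drule spec[of _ \<eta>]) (erule mp, rule conjI)

lemma clause_lim: "clause P r s f0 F b \<Longrightarrow> \<exists>\<eta>. sless r (Some \<eta>) b \<Longrightarrow>
   (\<forall>\<eta>. sless r (Some \<eta>) b \<longrightarrow> (\<exists>\<xi>. sless r (Some \<eta>) (Some \<xi>) \<and> sless r (Some \<xi>) b)) \<Longrightarrow>
   (if \<exists>v. ev_const r F b c v then ev_const r F b c (F b c) else F b c = None)"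
  unfolding clause_alt by (drule conjunct2, drule conjunct2, drule mp, rule conjI) (assumption+, erule spec)

lemma clauseI:
  assumes "\<not> (\<exists>\<eta>. sless r (Some \<eta>) b) \<Longrightarrow> F b = f0"
    and "\<And>\<eta>. sless r (Some \<eta>) b \<Longrightarrow>
   \<not> (\<exists>\<xi>. sless r (Some \<eta>) (Some \<xi>) \<and> sless r (Some \<xi>) b) \<Longrightarrow> F b = act P (s \<eta>) (F (Some \<eta>))"
    and "\<And>c. \<exists>\<eta>. sless r (Some \<eta>) b \<Longrightarrow>
   (\<forall>\<eta>. sless r (Some \<eta>) b \<longrightarrow> (\<exists>\<xi>. sless r (Some \<eta>) (Some \<xi>) \<and> sless r (Some \<xi>) b)) \<Longrightarrow>
   (if \<exists>v. ev_const r F b c v then ev_const r F b c (F b c) else F b c = None)"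
  shows "clause P r s f0 F b"
  unfolding clause_alt using assms by blast




definition good_perm :: "'c set \<Rightarrow> ('t \<Rightarrow> 'c \<Rightarrow> 'c) \<Rightarrow> bool" where
  "good_perm C P \<longleftrightarrow> (\<forall>t. bij (P t) \<and> (\<forall>c. P t c \<in> C \<longleftrightarrow> c \<in> C))"

lemma good_inv:
  assumes "good_perm C P"
  shows "inj (inv (P t))" "inv (P t) c \<in> C \<longleftrightarrow> c \<in> C"
proof -
  have b: "bij (P t)" and p: "\<And>c. P t c \<in> C \<longleftrightarrow> c \<in> C" using assms by (auto simp: good_perm_def)
  show "inj (inv (P t))" using b bij_imp_bij_inv bij_is_inj by blast
  have "P t (inv (P t) c) = c" using b by (simp add: bij_is_surj surj_f_inv_f)
  then show "inv (P t) c \<in> C \<longleftrightarrow> c \<in> C" using p[of "inv (P t) c"] by simp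
qed

definition invp :: "'c set \<Rightarrow> ('i option \<Rightarrow> 'c \<Rightarrow> 'c option) \<Rightarrow> 'i option \<Rightarrow> bool" where
  "invp C F b \<longleftrightarrow> (\<forall>c d v. F b c = Some v \<and> F b d = Some v \<longrightarrow> c = d) \<and> (\<forall>c v. F b c = Some v \<longrightarrow> (c \<in> C \<longleftrightarrow> v \<in> C))"

lemma run_invariant:
  assumes wo: "Well_order r" and run: "is_run P r s (\<lambda>c. Some c) F" and gp: "good_perm C P"
    and b: "b \<in> stages r"
  shows "invp C F b"
proof (rule stage_induct[OF wo b, of "invp C F"])
  fix b assume b1: "b \<in> stages r" and IHa: "\<And>\<eta>. sless r (Some \<eta>) b \<Longrightarrow> invp C F (Some \<eta>)"
  have IHb: "\<And>\<eta>. sless r (Some \<eta>) b \<Longrightarrow> (\<forall>c d v. F (Some \<eta>) c = Some v \<and> F (Some \<eta>) d = Some v \<longrightarrow> c = d) \<and> (\<forall>c v. F (Some \<eta>) c = Some v \<longrightarrow> (c \<in> C \<longleftrightarrow> v \<in> C))"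
    using IHa unfolding invp_def by blast
  have cl: "clause P r s (\<lambda>c. Some c) F b" using run b1 by (simp add: is_run_clause)
  have "(\<forall>c d v. F b c = Some v \<and> F b d = Some v \<longrightarrow> c = d) \<and> (\<forall>c v. F b c = Some v \<longrightarrow> (c \<in> C \<longleftrightarrow> v \<in> C))"
  proof (cases "\<exists>\<eta>. sless r (Some \<eta>) b")
    case False
    then show ?thesis using clause_zero[OF cl] by simp
  next
    case True
    show ?thesis
    proof (cases "\<exists>\<eta>. sless r (Some \<eta>) b \<and> \<not> (\<exists>\<xi>. sless r (Some \<eta>) (Some \<xi>) \<and> sless r (Some \<xi>) b)")
      case True
      then obtain \<eta> where e: "sless r (Some \<eta>) b" "\<not> (\<exists>\<xi>. sless r (Some \<eta>) (Some \<xi>) \<and> sless r (Some \<xi>) b)"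
        by blast
      have Fb: "F b = act P (s \<eta>) (F (Some \<eta>))" using clause_succ[OF cl e] .
      have IH: "(\<forall>c d v. F (Some \<eta>) c = Some v \<and> F (Some \<eta>) d = Some v \<longrightarrow> c = d) \<and>
          (\<forall>c v. F (Some \<eta>) c = Some v \<longrightarrow> (c \<in> C \<longleftrightarrow> v \<in> C))" using IHb[OF e(1)] .
      show ?thesis
      proof (intro conjI allI impI)
        fix c d v assume "F b c = Some v \<and> F b d = Some v"
        then have "inv (P (s \<eta>)) c = inv (P (s \<eta>)) d" using IH Fb by (auto simp: act_def)
        then show "c = d" using good_inv(1)[OF gp, of "s \<eta>"] by (simp add: inj_eq)
      next
        fix c v assume "F b c = Some v"
        then have "F (Some \<eta>) (inv (P (s \<eta>)) c) = Some v" using Fb by (simp add: act_def)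
        then show "c \<in> C \<longleftrightarrow> v \<in> C" using IH good_inv(2)[OF gp, of "s \<eta>" c] by blast
      qed
    next
      case False
      then have lim: "\<forall>\<eta>. sless r (Some \<eta>) b \<longrightarrow> (\<exists>\<xi>. sless r (Some \<eta>) (Some \<xi>) \<and> sless r (Some \<xi>) b)"
        by blast
      have L: "\<And>c. if \<exists>v. ev_const r F b c v then ev_const r F b c (F b c) else F b c = None"
        using clause_lim[OF cl True lim] .
      have ev: "ev_const r F b c (Some v)" if "F b c = Some v" for c v
        using L[of c] that by (auto split: if_splits)
      show ?thesis
      proof (intro conjI allI impI)
        fix c d v assume a: "F b c = Some v \<and> F b d = Some v"
        obtain \<xi> where x: "sless r (Some \<xi>) b" "F (Some \<xi>) c = Some v" "F (Some \<xi>) d = Some v"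
          using tails_meet[OF wo ev[of c v] ev[of d v]] a by blast
        then show "c = d" using IHb[OF x(1)] by blast
      next
        fix c v assume a: "F b c = Some v"
        obtain \<xi> where x: "sless r (Some \<xi>) b" "F (Some \<xi>) c = Some v"
          using tails_meet[OF wo ev[of c v] ev[of c v]] a by blast
        then show "c \<in> C \<longleftrightarrow> v \<in> C" using IHb[OF x(1)] by blast
      qed
    qed
  qed
  then show "invp C F b" by (simp add: invp_def)
qed

definition compose :: "('c \<Rightarrow> 'x option) \<Rightarrow> ('i option \<Rightarrow> 'c \<Rightarrow> 'c option) \<Rightarrow> 'i option \<Rightarrow> 'c \<Rightarrow> 'x option" where
  "compose g F b c = (case F b c of None \<Rightarrow> None | Some c' \<Rightarrow> g c')"

lemma run_compose:
  assumes wo: "Well_order r" and run: "is_run P r s (\<lambda>c. Some c) F"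
    and ginj: "\<And>c d w. g c = Some w \<Longrightarrow> g d = Some w \<Longrightarrow> c = d"
  shows "is_run P r s g (compose g F)"
  unfolding is_run_clause
proof
  fix b assume b: "b \<in> stages r"
  have cl: "clause P r s (\<lambda>c. Some c) F b" using run b by (simp add: is_run_clause)
  show "clause P r s g (compose g F) b"
  proof (rule clauseI)
    assume "\<not> (\<exists>\<eta>. sless r (Some \<eta>) b)"
    then show "compose g F b = g" using clause_zero[OF cl] by (auto simp: compose_def)
  next
    fix \<eta> assume "sless r (Some \<eta>) b" "\<not> (\<exists>\<xi>. sless r (Some \<eta>) (Some \<xi>) \<and> sless r (Some \<xi>) b)"
    then show "compose g F b = act P (s \<eta>) (compose g F (Some \<eta>))"
      using clause_succ[OF cl] by (auto simp: compose_def act_def)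
  next
    fix c assume ex: "\<exists>\<eta>. sless r (Some \<eta>) b" and lim: "\<forall>\<eta>. sless r (Some \<eta>) b \<longrightarrow> (\<exists>\<xi>. sless r (Some \<eta>) (Some \<xi>) \<and> sless r (Some \<xi>) b)"
    have L: "if \<exists>v. ev_const r F b c v then ev_const r F b c (F b c) else F b c = None"
      using clause_lim[OF cl ex lim] .
    show "if \<exists>v. ev_const r (compose g F) b c v then ev_const r (compose g F) b c (compose g F b c) else compose g F b c = None"
    proof (cases "F b c")
      case (Some c')
      then have "ev_const r F b c (Some c')" using L by (auto split: if_splits)
      then have "ev_const r (compose g F) b c (g c')"
        unfolding ev_const_def compose_def by fastforce
      moreover have "compose g F b c = g c'" using Some by (simp add: compose_def)
      ultimately show ?thesis by auto
    next
      case None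
      then have cN: "compose g F b c = None" by (simp add: compose_def)
      have "ev_const r (compose g F) b c None" if e: "ev_const r (compose g F) b c v" for v
      proof (cases v)
        case None then show ?thesis using e by simp
      next
        case (Some w)
        obtain \<eta> where h: "\<eta> \<in> Field r" "sless r (Some \<eta>) b"
          "\<forall>\<xi>\<in>Field r. (\<xi> = \<eta> \<or> sless r (Some \<eta>) (Some \<xi>)) \<and> sless r (Some \<xi>) b \<longrightarrow> compose g F (Some \<xi>) c = Some w"
          using e Some unfolding ev_const_def by blast
        obtain c0 where c0: "F (Some \<eta>) c = Some c0" "g c0 = Some w"
          using h(3)[rule_format, of \<eta>] h(1,2) by (auto simp: compose_def split: option.splits)
        have "\<forall>\<xi>\<in>Field r. (\<xi> = \<eta> \<or> sless r (Some \<eta>) (Some \<xi>)) \<and> sless r (Some \<xi>) b \<longrightarrow> F (Some \<xi>) c = Some c0"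
        proof (intro ballI impI)
          fix \<xi> assume "\<xi> \<in> Field r" "(\<xi> = \<eta> \<or> sless r (Some \<eta>) (Some \<xi>)) \<and> sless r (Some \<xi>) b"
          then have "compose g F (Some \<xi>) c = Some w" using h(3) by blast
          then obtain c1 where c1: "F (Some \<xi>) c = Some c1" "g c1 = Some w"
            by (auto simp: compose_def split: option.splits)
          have "c1 = c0" using ginj[OF c1(2) c0(2)] .
          then show "F (Some \<xi>) c = Some c0" using c1(1) by simp
        qed
        then have e0: "ev_const r F b c (Some c0)" using h(1,2) unfolding ev_const_def by blast
        then have e1: "ev_const r F b c (F b c)" using L by (auto split: if_splits)
        have "Some c0 = F b c" using ev_const_unique[OF wo e0 e1] .
        then show ?thesis using None by simp
      qed
      then show ?thesis using cN by auto
    qed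
  qed
qed




lemma transfer:
  assumes cl: "clause P r s f0 F b"
  and H1: "\<And>\<eta>. sless r (Some \<eta>) b \<Longrightarrow> sless r' (Some (h \<eta>)) b' \<and> F' (Some (h \<eta>)) = F (Some \<eta>) \<and> s' (h \<eta>) = s \<eta>"
  and H2: "\<And>\<eta> \<xi>. sless r (Some \<eta>) b \<Longrightarrow> sless r (Some \<xi>) b \<Longrightarrow> sless r (Some \<eta>) (Some \<xi>) \<longleftrightarrow> sless r' (Some (h \<eta>)) (Some (h \<xi>))"
  and H3: "\<And>\<eta>'. sless r' (Some \<eta>') b' \<Longrightarrow> \<exists>\<eta>. sless r (Some \<eta>) b \<and> (\<forall>\<xi>. (\<xi> = \<eta> \<or> sless r (Some \<eta>) (Some \<xi>)) \<and> sless r (Some \<xi>) b \<longrightarrow> h \<xi> = \<eta>' \<or> sless r' (Some \<eta>') (Some (h \<xi>)))"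
  and H6: "\<And>\<eta> \<xi>'. sless r (Some \<eta>) b \<Longrightarrow> sless r' (Some (h \<eta>)) (Some \<xi>') \<Longrightarrow> sless r' (Some \<xi>') b' \<Longrightarrow> \<exists>\<xi>. \<xi>' = h \<xi> \<and> sless r (Some \<xi>) b"
  and H7: "\<And>x y. sless r' (Some x) (Some y) \<Longrightarrow> \<not> sless r' (Some y) (Some x)"
  and H5: "F' b' = F b" and H0: "\<not> (\<exists>\<eta>. sless r (Some \<eta>) b) \<Longrightarrow> f0' = f0"
  and wo: "Well_order r"
  shows "clause P r' s' f0' F' b'"
proof -
  have evc: "ev_const r' F' b' c v \<longleftrightarrow> ev_const r F b c v" for c v
  proof
    assume "ev_const r' F' b' c v"
    then obtain \<eta>' where e: "sless r' (Some \<eta>') b'"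
      "\<forall>\<xi>\<in>Field r'. (\<xi> = \<eta>' \<or> sless r' (Some \<eta>') (Some \<xi>)) \<and> sless r' (Some \<xi>) b' \<longrightarrow> F' (Some \<xi>) c = v"
      unfolding ev_const_def by blast
    obtain \<eta> where h: "sless r (Some \<eta>) b" "\<forall>\<xi>. (\<xi> = \<eta> \<or> sless r (Some \<eta>) (Some \<xi>)) \<and> sless r (Some \<xi>) b \<longrightarrow> h \<xi> = \<eta>' \<or> sless r' (Some \<eta>') (Some (h \<xi>))"
      using H3[OF e(1)] by blast
    have "F (Some \<xi>) c = v" if "\<xi> \<in> Field r" "(\<xi> = \<eta> \<or> sless r (Some \<eta>) (Some \<xi>)) \<and> sless r (Some \<xi>) b" for \<xi>
    proof -
      have a: "h \<xi> = \<eta>' \<or> sless r' (Some \<eta>') (Some (h \<xi>))" using h(2) that(2) by blast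
      have b: "sless r' (Some (h \<xi>)) b'" "F' (Some (h \<xi>)) = F (Some \<xi>)" using H1 that(2) by blast+
      have "h \<xi> \<in> Field r'" using sless_field[OF b(1)] .
      then have "F' (Some (h \<xi>)) c = v" using e(2) a b(1) by blast
      then show ?thesis using b(2) by simp
    qed
    then show "ev_const r F b c v" unfolding ev_const_def using h(1) sless_field[OF h(1)] by blast
  next
    assume "ev_const r F b c v"
    then obtain \<eta> where e: "sless r (Some \<eta>) b"
      "\<forall>\<xi>\<in>Field r. (\<xi> = \<eta> \<or> sless r (Some \<eta>) (Some \<xi>)) \<and> sless r (Some \<xi>) b \<longrightarrow> F (Some \<xi>) c = v"
      unfolding ev_const_def by blast
    have hb: "sless r' (Some (h \<eta>)) b'" "F' (Some (h \<eta>)) = F (Some \<eta>)" using H1[OF e(1)] by blast+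
    have "F' (Some \<xi>') c = v" if "(\<xi>' = h \<eta> \<or> sless r' (Some (h \<eta>)) (Some \<xi>')) \<and> sless r' (Some \<xi>') b'" for \<xi>'
    proof (cases "\<xi>' = h \<eta>")
      case True
      then show ?thesis using hb e(2) e(1) sless_field[OF e(1)] by simp
    next
      case False
      then have l: "sless r' (Some (h \<eta>)) (Some \<xi>')" "sless r' (Some \<xi>') b'" using that by auto
      obtain \<xi> where x: "\<xi>' = h \<xi>" "sless r (Some \<xi>) b" using H6[OF e(1) l] by blast
      have "sless r (Some \<eta>) (Some \<xi>)" using H2[OF e(1) x(2)] l(1) x(1) by simp
      then have "F (Some \<xi>) c = v" using e(2) x(2) sless_field[OF x(2)] by blast
      then show ?thesis using H1[OF x(2)] x(1) by simp
    qed
    then show "ev_const r' F' b' c v" unfolding ev_const_def using hb(1) sless_field[OF hb(1)] by blast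
  qed
  show ?thesis
  proof (rule clauseI)
    assume n: "\<not> (\<exists>\<eta>. sless r' (Some \<eta>) b')"
    then have "\<not> (\<exists>\<eta>. sless r (Some \<eta>) b)" using H1 by blast
    then show "F' b' = f0'" using clause_zero[OF cl] H5 H0 by simp
  next
    fix \<eta>' assume a: "sless r' (Some \<eta>') b'" and nb: "\<not> (\<exists>\<xi>. sless r' (Some \<eta>') (Some \<xi>) \<and> sless r' (Some \<xi>) b')"
    obtain \<eta> where h: "sless r (Some \<eta>) b" "\<forall>\<xi>. (\<xi> = \<eta> \<or> sless r (Some \<eta>) (Some \<xi>)) \<and> sless r (Some \<xi>) b \<longrightarrow> h \<xi> = \<eta>' \<or> sless r' (Some \<eta>') (Some (h \<xi>))"
      using H3[OF a] by blast
    have hb: "sless r' (Some (h \<eta>)) b'" "F' (Some (h \<eta>)) = F (Some \<eta>)" "s' (h \<eta>) = s \<eta>" using H1[OF h(1)] by blast+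
    have eq: "h \<eta> = \<eta>'" using h(2) h(1) nb hb(1) by blast
    have "\<not> (\<exists>\<xi>. sless r (Some \<eta>) (Some \<xi>) \<and> sless r (Some \<xi>) b)"
    proof
      assume "\<exists>\<xi>. sless r (Some \<eta>) (Some \<xi>) \<and> sless r (Some \<xi>) b"
      then obtain \<xi> where x: "sless r (Some \<eta>) (Some \<xi>)" "sless r (Some \<xi>) b" by blast
      have "sless r' (Some (h \<eta>)) (Some (h \<xi>))" using H2[OF h(1) x(2)] x(1) by simp
      moreover have "sless r' (Some (h \<xi>)) b'" using H1[OF x(2)] by blast
      ultimately show False using nb eq by blast
    qed
    then have "F b = act P (s \<eta>) (F (Some \<eta>))" using clause_succ[OF cl h(1)] by blast
    then show "F' b' = act P (s' \<eta>') (F' (Some \<eta>'))" using H5 hb eq by simp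
  next
    fix c assume ex: "\<exists>\<eta>. sless r' (Some \<eta>) b'"
      and lim: "\<forall>\<eta>. sless r' (Some \<eta>) b' \<longrightarrow> (\<exists>\<xi>. sless r' (Some \<eta>) (Some \<xi>) \<and> sless r' (Some \<xi>) b')"
    have ex1: "\<exists>\<eta>. sless r (Some \<eta>) b" using ex H3 by blast
    have lim1: "\<forall>\<eta>. sless r (Some \<eta>) b \<longrightarrow> (\<exists>\<xi>. sless r (Some \<eta>) (Some \<xi>) \<and> sless r (Some \<xi>) b)"
    proof (rule ccontr)
      assume "\<not> ?thesis"
      then obtain \<eta> where e: "sless r (Some \<eta>) b" and nb: "\<not> (\<exists>\<xi>. sless r (Some \<eta>) (Some \<xi>) \<and> sless r (Some \<xi>) b)"
        by blast
      have hb: "sless r' (Some (h \<eta>)) b'" using H1[OF e] by blast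
      obtain \<xi>' where x': "sless r' (Some (h \<eta>)) (Some \<xi>')" "sless r' (Some \<xi>') b'" using lim hb by blast
      obtain \<xi> where x: "sless r (Some \<xi>) b" "\<forall>\<zeta>. (\<zeta> = \<xi> \<or> sless r (Some \<xi>) (Some \<zeta>)) \<and> sless r (Some \<zeta>) b \<longrightarrow> h \<zeta> = \<xi>' \<or> sless r' (Some \<xi>') (Some (h \<zeta>))"
        using H3[OF x'(2)] by blast
      have fr: "\<eta> \<in> Field r" "\<xi> \<in> Field r" using sless_field[OF e] sless_field[OF x(1)] by blast+
      have tot: "\<eta> = \<xi> \<or> (\<eta>, \<xi>) \<in> r \<or> (\<xi>, \<eta>) \<in> r"
        using wo fr unfolding well_order_on_def linear_order_on_def total_on_def by blast
      have "sless r (Some \<xi>) (Some \<eta>) \<or> \<xi> = \<eta>"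
        using tot nb x(1) by auto
      then have "h \<eta> = \<xi>' \<or> sless r' (Some \<xi>') (Some (h \<eta>))" using x(2) e by blast
      then show False using x'(1) H7 by (metis sless_Some)
    qed
    have "if \<exists>v. ev_const r F b c v then ev_const r F b c (F b c) else F b c = None"
      using clause_lim[OF cl ex1 lim1] .
    then show "if \<exists>v. ev_const r' F' b' c v then ev_const r' F' b' c (F' b' c) else F' b' c = None"
      using evc H5 by simp
  qed
qed




lemma cr_Inl_Inl[simp]: "(Inl a, Inl b) \<in> concat_rel r1 r2 \<longleftrightarrow> (a, b) \<in> r1"
  by (auto simp: concat_rel_def)
lemma cr_Inr_Inr[simp]: "(Inr a, Inr b) \<in> concat_rel r1 r2 \<longleftrightarrow> (a, b) \<in> r2"
  by (auto simp: concat_rel_def)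
lemma cr_Inl_Inr[simp]: "(Inl a, Inr b) \<in> concat_rel r1 r2 \<longleftrightarrow> a \<in> Field r1 \<and> b \<in> Field r2"
  by (auto simp: concat_rel_def)
lemma cr_Inr_Inl[simp]: "(Inr a, Inl b) \<notin> concat_rel r1 r2"
  by (auto simp: concat_rel_def)

lemma cr_Field: "Field (concat_rel r1 r2) = Inl ` Field r1 \<union> Inr ` Field r2"
  unfolding concat_rel_def Field_def by (auto simp: image_iff)

lemma cr_Field_Inl[simp]: "Inl a \<in> Field (concat_rel r1 r2) \<longleftrightarrow> a \<in> Field r1"
  by (auto simp: cr_Field)
lemma cr_Field_Inr[simp]: "Inr a \<in> Field (concat_rel r1 r2) \<longleftrightarrow> a \<in> Field r2"
  by (auto simp: cr_Field)

lemma L2: "b2 \<in> stages r2 \<Longrightarrow> sless (concat_rel r1 r2) (Some (Inl a)) (map_option Inr b2) \<longleftrightarrow> a \<in> Field r1"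
  by (cases b2) (auto simp: stages_def)
lemma L3: "sless (concat_rel r1 r2) (Some (Inr a)) (map_option Inr b2) \<longleftrightarrow> sless r2 (Some a) b2"
  by (cases b2) auto

lemma cr_stages: "b' \<in> stages (concat_rel r1 r2) \<Longrightarrow> (\<exists>i\<in>Field r1. b' = Some (Inl i)) \<or> (\<exists>b2\<in>stages r2. b' = map_option Inr b2)"
  unfolding stages_def cr_Field by auto

lemma cr_H7:
  assumes "Well_order r1" "Well_order r2"
  shows "sless (concat_rel r1 r2) (Some x) (Some y) \<Longrightarrow> \<not> sless (concat_rel r1 r2) (Some y) (Some x)"
proof -
  have a1: "antisym r1" and a2: "antisym r2" using assms
    unfolding well_order_on_def linear_order_on_def partial_order_on_def by auto
  show "sless (concat_rel r1 r2) (Some x) (Some y) \<Longrightarrow> \<not> sless (concat_rel r1 r2) (Some y) (Some x)"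
    using a1 a2 by (cases x; cases y) (auto dest: antisymD)
qed

definition Fc :: "('i option \<Rightarrow> 'c \<Rightarrow> 'x option) \<Rightarrow> ('j option \<Rightarrow> 'c \<Rightarrow> 'x option) \<Rightarrow> ('i + 'j) option \<Rightarrow> 'c \<Rightarrow> 'x option" where
  "Fc F1 G b = (case b of None \<Rightarrow> G None | Some (Inl i) \<Rightarrow> F1 (Some i) | Some (Inr j) \<Rightarrow> G (Some j))"

lemma Fc_Inl[simp]: "Fc F1 G (Some (Inl i)) = F1 (Some i)" by (simp add: Fc_def)
lemma Fc_map[simp]: "Fc F1 G (map_option Inr b2) = G b2" by (cases b2) (simp_all add: Fc_def)
lemma Fc_Inr[simp]: "Fc F1 G (Some (Inr j)) = G (Some j)" by (simp add: Fc_def)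

lemma concat_run:
  assumes wo1: "Well_order r1" and wo2: "Well_order r2"
    and run1: "is_run P r1 s1 f0 F1" and run2: "is_run P r2 s2 (F1 None) G"
  shows "is_run P (concat_rel r1 r2) (concat_seq s1 s2) f0 (Fc F1 G)"
  unfolding is_run_clause
proof
  let ?R = "concat_rel r1 r2"
  have H7: "\<And>x y. sless ?R (Some x) (Some y) \<Longrightarrow> \<not> sless ?R (Some y) (Some x)"
    using cr_H7[OF wo1 wo2] by blast
  have H7': "\<And>x y. (x, y) \<in> ?R \<Longrightarrow> x \<noteq> y \<Longrightarrow> (y, x) \<in> ?R \<Longrightarrow> False"
    using H7 by (metis sless_Some)
  fix b' assume b': "b' \<in> stages ?R"
  show "clause P ?R (concat_seq s1 s2) f0 (Fc F1 G) b'"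
    using cr_stages[OF b']
  proof (elim disjE bexE)
    fix i assume i: "i \<in> Field r1" and bi: "b' = Some (Inl i)"
    have cl: "clause P r1 s1 f0 F1 (Some i)" using run1 i by (simp add: is_run_clause stages_def)
    show ?thesis unfolding bi
    proof (rule transfer[OF cl, where h = Inl])
      fix \<eta>' assume "sless ?R (Some \<eta>') (Some (Inl i))"
      then obtain a where "\<eta>' = Inl a" "sless r1 (Some a) (Some i)" by (cases \<eta>') auto
      then show "\<exists>\<eta>. sless r1 (Some \<eta>) (Some i) \<and> (\<forall>\<xi>. (\<xi> = \<eta> \<or> sless r1 (Some \<eta>) (Some \<xi>)) \<and> sless r1 (Some \<xi>) (Some i) \<longrightarrow> Inl \<xi> = \<eta>' \<or> sless ?R (Some \<eta>') (Some (Inl \<xi>)))"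
        by auto
    next
      fix \<eta> \<xi>' assume "sless r1 (Some \<eta>) (Some i)" "sless ?R (Some (Inl \<eta>)) (Some \<xi>')" "sless ?R (Some \<xi>') (Some (Inl i))"
      then show "\<exists>\<xi>. \<xi>' = Inl \<xi> \<and> sless r1 (Some \<xi>) (Some i)" by (cases \<xi>') auto
    qed (auto dest: H7' simp: concat_seq_def wo1)
  next
    fix b2 assume b2: "b2 \<in> stages r2" and bb: "b' = map_option Inr b2"
    have cl2: "clause P r2 s2 (F1 None) G b2" using run2 b2 by (simp add: is_run_clause)
    show ?thesis
    proof (cases "\<exists>\<eta>. sless r2 (Some \<eta>) b2")
      case True
      then obtain \<eta>0 where e0: "sless r2 (Some \<eta>0) b2" by blast
      show ?thesis unfolding bb
      proof (rule transfer[OF cl2, where h = Inr])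
        fix \<eta>' assume a: "sless ?R (Some \<eta>') (map_option Inr b2)"
        show "\<exists>\<eta>. sless r2 (Some \<eta>) b2 \<and> (\<forall>\<xi>. (\<xi> = \<eta> \<or> sless r2 (Some \<eta>) (Some \<xi>)) \<and> sless r2 (Some \<xi>) b2 \<longrightarrow> Inr \<xi> = \<eta>' \<or> sless ?R (Some \<eta>') (Some (Inr \<xi>)))"
        proof (cases \<eta>')
          case (Inl a')
          then have "a' \<in> Field r1" using a L2[OF b2, of r1 a'] by simp
          then show ?thesis using e0 Inl sless_field[of r2 _ b2] by auto
        next
          case (Inr a')
          then show ?thesis using a L3[of r1 r2 a' b2] by auto
        qed
      next
        fix \<eta> \<xi>' assume "sless r2 (Some \<eta>) b2" "sless ?R (Some (Inr \<eta>)) (Some \<xi>')" "sless ?R (Some \<xi>') (map_option Inr b2)"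
        then show "\<exists>\<xi>. \<xi>' = Inr \<xi> \<and> sless r2 (Some \<xi>) b2" by (cases \<xi>') (auto simp: L3)
      qed (auto dest: H7' simp: concat_seq_def wo2 L3 True)
    next
      case False
      have cl: "clause P r1 s1 f0 F1 None" using run1 by (simp add: is_run_clause stages_def)
      have G0: "G b2 = F1 None" using clause_zero[OF cl2 False] .
      show ?thesis unfolding bb
      proof (rule transfer[OF cl, where h = Inl])
        fix \<eta>' assume a: "sless ?R (Some \<eta>') (map_option Inr b2)"
        then show "\<exists>\<eta>. sless r1 (Some \<eta>) None \<and> (\<forall>\<xi>. (\<xi> = \<eta> \<or> sless r1 (Some \<eta>) (Some \<xi>)) \<and> sless r1 (Some \<xi>) None \<longrightarrow> Inl \<xi> = \<eta>' \<or> sless ?R (Some \<eta>') (Some (Inl \<xi>)))"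
          using False L2[OF b2, of r1] by (cases \<eta>') (auto simp: L3)
      next
        fix \<eta> \<xi>' assume "sless r1 (Some \<eta>) None" "sless ?R (Some (Inl \<eta>)) (Some \<xi>')" "sless ?R (Some \<xi>') (map_option Inr b2)"
        then show "\<exists>\<xi>. \<xi>' = Inl \<xi> \<and> sless r1 (Some \<xi>) None"
          using False L2[OF b2, of r1] by (cases \<xi>') (auto simp: L3)
      qed (auto dest: H7' simp: concat_seq_def wo1 L2[OF b2, of r1] G0)
    qed
  qed
qed




lemma uc_empty: "univ_conv C P ({} :: 'k rel) s0"
  unfolding univ_conv_def
proof (intro exI conjI)
  show "is_run P ({} :: 'k rel) s0 (\<lambda>c. Some c) (\<lambda>b c. Some c)"
    unfolding is_run_def by (simp add: sless_def)
  show "\<forall>c\<in>C. Some c \<noteq> None" by simp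
qed

lemma uc_concat:
  assumes gp: "good_perm C P" and wo1: "Well_order r1" and wo2: "Well_order r2"
    and u1: "univ_conv C P r1 s1" and u2: "univ_conv C P r2 s2"
  shows "univ_conv C P (concat_rel r1 r2) (concat_seq s1 s2)"
proof -
  obtain F1 where run1: "is_run P r1 s1 (\<lambda>c. Some c) F1" and l1: "\<forall>c\<in>C. F1 None c \<noteq> None"
    using u1 unfolding univ_conv_def by blast
  obtain F2 where run2: "is_run P r2 s2 (\<lambda>c. Some c) F2" and l2: "\<forall>c\<in>C. F2 None c \<noteq> None"
    using u2 unfolding univ_conv_def by blast
  have Nst: "None \<in> stages r1" "None \<in> stages r2" by (simp_all add: stages_def)
  have i1: "invp C F1 None" using run_invariant[OF wo1 run1 gp Nst(1)] .
  have i2: "invp C F2 None" using run_invariant[OF wo2 run2 gp Nst(2)] .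
  have ginj: "\<And>c d w. F1 None c = Some w \<Longrightarrow> F1 None d = Some w \<Longrightarrow> c = d"
    using i1 unfolding invp_def by blast
  have runG: "is_run P r2 s2 (F1 None) (compose (F1 None) F2)"
    using run_compose[OF wo2 run2 ginj] .
  have runF: "is_run P (concat_rel r1 r2) (concat_seq s1 s2) (\<lambda>c. Some c) (Fc F1 (compose (F1 None) F2))"
    using concat_run[OF wo1 wo2 run1 runG] .
  have "Fc F1 (compose (F1 None) F2) None c \<noteq> None" if c: "c \<in> C" for c
  proof -
    obtain c' where c': "F2 None c = Some c'" using l2 c by blast
    then have "c' \<in> C" using i2 c unfolding invp_def by blast
    then have "F1 None c' \<noteq> None" using l1 by blast
    then show ?thesis using c' by (simp add: Fc_def compose_def)
  qed
  then show ?thesis unfolding univ_conv_def using runF by blast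
qed

theorem corollary3p4:
  fixes L :: "'a set"
    and s0 :: "'k \<Rightarrow> 'a twist"
    and r1 :: "'i rel" and s1 :: "'i \<Rightarrow> 'a twist"
    and r2 :: "'j rel" and s2 :: "'j \<Rightarrow> 'a twist"
  assumes "infinite L"
  shows
    "(univ_conv (edgeless_cube L) perm_edgeless ({} :: 'k rel) s0 \<and>
      (basic_seq L r1 s1 \<and> basic_seq L r2 s2 \<and>
       univ_conv (edgeless_cube L) perm_edgeless r1 s1 \<and>
       univ_conv (edgeless_cube L) perm_edgeless r2 s2
       \<longrightarrow> univ_conv (edgeless_cube L) perm_edgeless (concat_rel r1 r2) (concat_seq s1 s2)))
   \<and> (univ_conv (edged_cube L) perm_edged ({} :: 'k rel) s0 \<and>
      (basic_seq L r1 s1 \<and> basic_seq L r2 s2 \<and>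
       univ_conv (edged_cube L) perm_edged r1 s1 \<and>
       univ_conv (edged_cube L) perm_edged r2 s2
       \<longrightarrow> univ_conv (edged_cube L) perm_edged (concat_rel r1 r2) (concat_seq s1 s2)))"
proof -
  have g1: "good_perm (edgeless_cube L) perm_edgeless"
    unfolding good_perm_def using perm_edgeless_ok by blast
  have g2: "good_perm (edged_cube L) perm_edged"
    unfolding good_perm_def using perm_edged_ok by blast
  show ?thesis
  proof (intro conjI impI)
    show "univ_conv (edgeless_cube L) perm_edgeless ({} :: 'k rel) s0" by (rule uc_empty)
    show "univ_conv (edged_cube L) perm_edged ({} :: 'k rel) s0" by (rule uc_empty)
  next
    assume a: "basic_seq L r1 s1 \<and> basic_seq L r2 s2 \<and>
       univ_conv (edgeless_cube L) perm_edgeless r1 s1 \<and> univ_conv (edgeless_cube L) perm_edgeless r2 s2"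
    then have "Well_order r1" "Well_order r2" unfolding basic_seq_def by blast+
    then show "univ_conv (edgeless_cube L) perm_edgeless (concat_rel r1 r2) (concat_seq s1 s2)"
      using uc_concat[OF g1] a by blast
  next
    assume a: "basic_seq L r1 s1 \<and> basic_seq L r2 s2 \<and>
       univ_conv (edged_cube L) perm_edged r1 s1 \<and> univ_conv (edged_cube L) perm_edged r2 s2"
    then have "Well_order r1" "Well_order r2" unfolding basic_seq_def by blast+
    then show "univ_conv (edged_cube L) perm_edged (concat_rel r1 r2) (concat_seq s1 s2)"
      using uc_concat[OF g2] a by blast
  qed
qed


end
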